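(* Let $A$ be a continuous symmetric tensor field of type $(1,1)$ on a Riemannian $2$-manifold $M$, and let $q\in M$ be an isolated $A$-singularity, i.e. there is a neighborhood $V$ of $q$ such that the eigenvalues of $A(p)$ are distinct for every $p\in V-\{q\}$. Then for every continuous field of directions (line field) $\xi$ on a punctured neighborhood of $q$, one has $$2\,j(A)=j\Big(\big(A-\tfrac12(\operatorname{tr}A)I\big)\xi\Big)+j(\xi).$$
   Context: For a continuous line field $\eta$ on a punctured neighborhood of $q$, $j(\eta)$ denotes its Poincar\'e-Hopf index at $q$: with an orthonormal frame $\{e_1,e_2\}$ near $q$, a positively parametrized Jordan curve $\gamma:[0,1]\to M$ around $q$ (in a small neighborhood), and a continuous $\theta:[0,1]\to\mathbb R$ with $\cos\theta(t)e_1+\sin\theta(t)e_2$ spanning $\eta(\gamma(t))$, $j(\eta)=(\theta(1)-\theta(0))/(2\pi)\in\frac12\mathbb Z$. On $V-\{q\}$ the eigenspaces of $A$ form two continuous line fields, which have the same index at $q$; this common index is denoted $j(A)$. For a tensor field $B$ and a line field $\xi$, $B\xi$ denotes the line field obtained by applying $B(p)$ to any vector spanning $\xi(p)$ (here $B=A-\frac12(\operatorname{tr}A)I$ is traceless symmetric and nonzero, hence invertible, on $V-\{q\}$). *)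

theory Defs
  imports "HOL-Analysis.Analysis" "HOL-Complex_Analysis.Winding_Numbers"
begin

text \<open>A neighbourhood of q in the Riemannian surface M is identified (via a chart)
with an open subset of the complex plane. Tangent vectors are written in components with respect
to a fixed continuous orthonormal frame e1, e2 (type real^2, e1 = axis 1 1, e2 = axis 2 1).
In such a frame a symmetric (1,1)-tensor is a symmetric 2x2 real matrix; a line field assigns to
each point a one-dimensional subspace of real^2.\<close>

definition frame_vec :: "real \<Rightarrow> real^2" where
  "frame_vec \<theta> = vector [cos \<theta>, sin \<theta>]"

definition continuous_line_field :: "complex set \<Rightarrow> (complex \<Rightarrow> (real^2) set) \<Rightarrow> bool" where
  "continuous_line_field S \<xi> \<longleftrightarrow>
     (\<forall>p\<in>S. \<exists>N v. open N \<and> p \<in> N \<and> continuous_on (N \<inter> S) v \<and>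
        (\<forall>x\<in>N \<inter> S. v x \<noteq> 0 \<and> \<xi> x = span {v x}))"

definition ph_index :: "(complex \<Rightarrow> (real^2) set) \<Rightarrow> complex \<Rightarrow> real" where
  "ph_index \<eta> q = (THE k. \<exists>\<epsilon>>0. \<forall>\<gamma> \<theta>.
      simple_path \<gamma> \<and> pathfinish \<gamma> = pathstart \<gamma> \<and>
      path_image \<gamma> \<subseteq> ball q \<epsilon> - {q} \<and> winding_number \<gamma> q = 1 \<and>
      continuous_on {0..1} \<theta> \<and>
      (\<forall>t\<in>{0..1}. \<eta> (\<gamma> t) = span {frame_vec (\<theta> t)})
      \<longrightarrow> k = (\<theta> 1 - \<theta> 0) / (2 * pi))"

definition eigenvalues_of :: "real^2^2 \<Rightarrow> real set" where
  "eigenvalues_of M = {c. \<exists>v. v \<noteq> 0 \<and> M *v v = c *\<^sub>R v}"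

text \<open>One of the two eigenline fields of A (the one of the larger eigenvalue);
both have the same index, denoted j(A).\<close>
definition eigen_line_field :: "(complex \<Rightarrow> real^2^2) \<Rightarrow> complex \<Rightarrow> (real^2) set" where
  "eigen_line_field A p = {v. A p *v v = Max (eigenvalues_of (A p)) *\<^sub>R v}"

definition tensor_index :: "(complex \<Rightarrow> real^2^2) \<Rightarrow> complex \<Rightarrow> real" where
  "tensor_index A q = ph_index (eigen_line_field A) q"

definition apply_tensor :: "(complex \<Rightarrow> real^2^2) \<Rightarrow> (complex \<Rightarrow> (real^2) set) \<Rightarrow> complex \<Rightarrow> (real^2) set" where
  "apply_tensor B \<xi> p = (\<lambda>v. B p *v v) ` \<xi> p"

end

theory Submission
  imports Defs "HOL-Complex_Analysis.Riemann_Mapping"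
begin


definition cv :: "real^2 \<Rightarrow> complex" where "cv w = of_real (w$1) + \<i> * of_real (w$2)"
definition vc :: "complex \<Rightarrow> real^2" where "vc z = vector [Re z, Im z]"
definition sqn :: "complex \<Rightarrow> complex" where "sqn z = z * z / of_real ((cmod z)^2)"

lemma cv_vc[simp]: "cv (vc z) = z" by (simp add: cv_def vc_def complex_eq_iff)
lemma vc_cv[simp]: "vc (cv w) = w" by (simp add: cv_def vc_def vec_eq_iff forall_2)

lemma cv_eq_iff: "cv v = cv w \<longleftrightarrow> v = w"
  by (metis vc_cv)

lemma cv_scale: "cv (c *\<^sub>R w) = of_real c * cv w"
  by (simp add: cv_def complex_eq_iff)

lemma cv_frame: "cv (frame_vec t) = cis t"
  by (simp add: cv_def frame_vec_def complex_eq_iff)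

lemma cv_zero: "cv w = 0 \<longleftrightarrow> w = 0"
  by (metis cv_vc vc_cv cv_scale mult_zero_left of_real_0 scale_zero_left)

lemma mv1: "((M::real^2^2) *v v)$1 = M$1$1 * v$1 + M$1$2 * v$2"
  by (simp add: matrix_vector_mult_def sum_2)
lemma mv2: "((M::real^2^2) *v v)$2 = M$2$1 * v$1 + M$2$2 * v$2"
  by (simp add: matrix_vector_mult_def sum_2)

lemma cv_mat:
  fixes M :: "real^2^2"
  assumes "transpose M = M"
  shows "cv (M *v v) = of_real ((M$1$1 + M$2$2)/2) * cv v
     + Complex ((M$1$1 - M$2$2)/2) (M$1$2) * cnj (cv v)"
proof -
  have "transpose M $ 1 $ 2 = M $ 2 $ 1" by (simp add: transpose_def)
  then have s: "M$2$1 = M$1$2" using assms by simp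
  have r: "Re (cv (M *v v)) = Re (of_real ((M$1$1 + M$2$2)/2) * cv v
     + Complex ((M$1$1 - M$2$2)/2) (M$1$2) * cnj (cv v))"
    by (simp add: cv_def mv1) (simp add: field_simps)
  have i: "Im (cv (M *v v)) = Im (of_real ((M$1$1 + M$2$2)/2) * cv v
     + Complex ((M$1$1 - M$2$2)/2) (M$1$2) * cnj (cv v))"
    by (simp add: cv_def mv2 s) (simp add: field_simps)
  show ?thesis using r i complex_eqI by blast
qed

lemma matB_eq: "((M::real^2^2) - (trace M / 2) *\<^sub>R mat 1) *v v = M *v v - (trace M / 2) *\<^sub>R v"
  by (simp add: matrix_vector_mult_diff_rdistrib scaleR_matrix_vector_assoc[symmetric])

lemma cv_diff: "cv (a - b) = cv a - cv b"
  by (simp add: cv_def algebra_simps)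

lemma cv_matB:
  fixes M :: "real^2^2"
  assumes "transpose M = M"
  shows "cv ((M - (trace M / 2) *\<^sub>R mat 1) *v v) =
      Complex ((M$1$1 - M$2$2)/2) (M$1$2) * cnj (cv v)"
proof -
  have t: "trace M = M$1$1 + M$2$2" by (simp add: trace_def sum_2)
  show ?thesis unfolding matB_eq cv_diff cv_scale cv_mat[OF assms] by (simp add: t)
qed

lemma span_single_eq:
  fixes w u :: "real^2"
  assumes "w \<noteq> 0" "u \<noteq> 0"
  shows "span {w} = span {u} \<longleftrightarrow> (\<exists>c. c \<noteq> 0 \<and> w = c *\<^sub>R u)"
proof
  assume "span {w} = span {u}"
  then have "w \<in> span {u}" by (metis span_base singletonI)
  then obtain c where "w = c *\<^sub>R u" by (auto simp: span_singleton)
  then show "\<exists>c. c \<noteq> 0 \<and> w = c *\<^sub>R u" using assms by auto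
next
  assume "\<exists>c. c \<noteq> 0 \<and> w = c *\<^sub>R u"
  then obtain c where c: "c \<noteq> 0" "w = c *\<^sub>R u" by auto
  show "span {w} = span {u}"
  proof
    show "span {w} \<subseteq> span {u}"
    proof
      fix x assume "x \<in> span {w}"
      then obtain k where "x = k *\<^sub>R w" by (auto simp: span_singleton)
      then have "x = (k * c) *\<^sub>R u" using c by simp
      then show "x \<in> span {u}" by (auto simp: span_singleton)
    qed
    show "span {u} \<subseteq> span {w}"
    proof
      fix x assume "x \<in> span {u}"
      then obtain k where "x = k *\<^sub>R u" by (auto simp: span_singleton)
      then have "x = (k / c) *\<^sub>R w" using c by simp
      then show "x \<in> span {w}" by (auto simp: span_singleton)
    qed
  qed
qed

lemma sqn_cis_iff:
  fixes z :: complex assumes "z \<noteq> 0"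
  shows "(\<exists>c::real. c \<noteq> 0 \<and> z = of_real c * cis t) \<longleftrightarrow> sqn z = cis (2*t)"
proof
  assume "\<exists>c::real. c \<noteq> 0 \<and> z = of_real c * cis t"
  then obtain c where c: "c \<noteq> 0" "z = of_real c * cis t" by auto
  have "cmod z ^ 2 = c^2" using c by (simp add: norm_mult)
  moreover have "cis t * cis t = cis (2*t)" by (simp add: cis_mult)
  ultimately show "sqn z = cis (2*t)" using c
    by (simp add: sqn_def field_simps power2_eq_square)
next
  assume h: "sqn z = cis (2*t)"
  define u where "u = z / of_real (cmod z)"
  have nz: "cmod z \<noteq> 0" using assms by simp
  have "u * u = sqn z" using nz by (simp add: u_def sqn_def power2_eq_square)
  also have "\<dots> = cis t * cis t" using h by (simp add: cis_mult)
  finally have "(u - cis t) * (u + cis t) = 0" by (simp add: algebra_simps)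
  then have "u = cis t \<or> u = - cis t" by (auto simp: add_eq_0_iff)
  then show "\<exists>c::real. c \<noteq> 0 \<and> z = of_real c * cis t"
  proof
    assume "u = cis t" then show ?thesis using nz
      by (intro exI[of _ "cmod z"]) (auto simp: u_def field_simps)
  next
    assume "u = - cis t" then show ?thesis using nz
      by (intro exI[of _ "- cmod z"]) (auto simp: u_def field_simps)
  qed
qed

lemma span_frame_iff:
  fixes w :: "real^2" assumes "w \<noteq> 0"
  shows "span {w} = span {frame_vec t} \<longleftrightarrow> sqn (cv w) = cis (2*t)"
proof -
  have fz: "frame_vec t \<noteq> 0" using cv_zero[of "frame_vec t"] by (auto simp: cv_frame)
  have "span {w} = span {frame_vec t} \<longleftrightarrow> (\<exists>c. c \<noteq> 0 \<and> w = c *\<^sub>R frame_vec t)"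
    by (rule span_single_eq[OF assms fz])
  also have "\<dots> \<longleftrightarrow> (\<exists>c::real. c \<noteq> 0 \<and> cv w = of_real c * cis t)"
    by (metis cv_eq_iff cv_frame cv_scale)
  also have "\<dots> \<longleftrightarrow> sqn (cv w) = cis (2*t)"
    by (rule sqn_cis_iff) (use assms cv_zero in auto)
  finally show ?thesis .
qed


lemma sqn_scale: "c \<noteq> 0 \<Longrightarrow> z \<noteq> 0 \<Longrightarrow> sqn (of_real c * z) = sqn z"
proof -
  assume c: "c \<noteq> 0" and z: "z \<noteq> 0"
  have "(cmod (of_real c * z))^2 = c^2 * (cmod z)^2" by (simp add: norm_mult power_mult_distrib)
  then have "sqn (of_real c * z) = (of_real (c^2) * (z * z)) / (of_real (c^2) * of_real ((cmod z)^2))"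
    by (simp add: sqn_def power2_eq_square algebra_simps)
  also have "\<dots> = sqn z" using c by (simp add: sqn_def)
  finally show ?thesis .
qed

lemma norm_sqn: "z \<noteq> 0 \<Longrightarrow> norm (sqn z) = 1"
  by (simp add: sqn_def norm_mult norm_divide power2_eq_square)

lemma fix_exists:
  fixes \<beta> :: complex
  shows "\<exists>z. z \<noteq> 0 \<and> \<beta> * cnj z = of_real (cmod \<beta>) * z"
proof (cases "\<beta> + of_real (cmod \<beta>) = 0")
  case True
  then have b: "\<beta> = - of_real (cmod \<beta>)" by (simp add: add_eq_0_iff)
  show ?thesis
    by (rule exI[of _ \<i>]) (subst b, simp)
next
  case False
  have "\<beta> * cnj \<beta> = of_real (cmod \<beta>) * of_real (cmod \<beta>)"
    by (metis complex_norm_square power2_eq_square of_real_mult)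
  then have "\<beta> * cnj (\<beta> + of_real (cmod \<beta>)) = of_real (cmod \<beta>) * (\<beta> + of_real (cmod \<beta>))"
    by (simp add: algebra_simps)
  then show ?thesis using False by blast
qed

lemma cnj_eq_imp_Im: "cnj w = w \<Longrightarrow> Im w = 0" by (simp add: complex_eq_iff)

lemma fix_space:
  fixes \<beta> z0 z :: complex
  assumes b: "\<beta> \<noteq> 0" and z0: "z0 \<noteq> 0" "\<beta> * cnj z0 = of_real (cmod \<beta>) * z0"
  shows "\<beta> * cnj z = of_real (cmod \<beta>) * z \<longleftrightarrow> (\<exists>t::real. z = of_real t * z0)"
proof
  assume h: "\<beta> * cnj z = of_real (cmod \<beta>) * z"
  define u where "u = \<beta> / of_real (cmod \<beta>)"
  have R: "cmod \<beta> \<noteq> 0" using b by simp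
  have zu: "z = u * cnj z" using h R by (simp add: u_def field_simps)
  have z0u: "z0 = u * cnj z0" using z0 R by (simp add: u_def field_simps)
  have uu: "u * cnj u = 1" using R
    by (simp add: u_def complex_norm_square[symmetric] power2_eq_square field_simps)
  have "cnj (z * cnj z0) = cnj z * z0" by simp
  also have "\<dots> = (cnj u * z) * (u * cnj z0)"
    by (metis complex_cnj_cnj complex_cnj_mult z0u zu)
  also have "\<dots> = z * cnj z0" using uu by (simp add: algebra_simps)
  finally have "Im (z * cnj z0) = 0" by (rule cnj_eq_imp_Im)
  then have real: "z * cnj z0 = of_real (Re (z * cnj z0))" by (simp add: complex_eq_iff)
  have n0: "z0 * cnj z0 \<noteq> 0" using z0 by simp
  have "z = (z * cnj z0) * z0 / (z0 * cnj z0)" using n0 by (simp add: field_simps)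
  also have "z0 * cnj z0 = of_real ((cmod z0)^2)" by (simp only: complex_norm_square)
  finally have "z = of_real (Re (z * cnj z0) / (cmod z0)^2) * z0"
    by (subst (asm) real) (simp add: field_simps)
  then show "\<exists>t::real. z = of_real t * z0" by blast
next
  assume "\<exists>t::real. z = of_real t * z0"
  then obtain t where "z = of_real t * z0" by blast
  then show "\<beta> * cnj z = of_real (cmod \<beta>) * z" using z0 by (simp add: algebra_simps)
qed

lemma sqn_fix:
  fixes \<beta> z0 :: complex
  assumes b: "\<beta> \<noteq> 0" and z0: "z0 \<noteq> 0" "\<beta> * cnj z0 = of_real (cmod \<beta>) * z0"
  shows "sqn z0 = \<beta> / of_real (cmod \<beta>)"
proof -
  have R: "cmod \<beta> \<noteq> 0" using b by simp
  have c0: "cnj z0 \<noteq> 0" using z0 by simp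
  have "sqn z0 = z0 * z0 / (z0 * cnj z0)"
    by (simp only: sqn_def complex_norm_square)
  also have "\<dots> = z0 / cnj z0" using z0 by simp
  also have "\<dots> = \<beta> / of_real (cmod \<beta>)" using z0 R c0 by (simp add: field_simps)
  finally show ?thesis .
qed

lemma eig_complex:
  fixes \<beta> :: complex and s :: real
  shows "(\<exists>z. z \<noteq> 0 \<and> \<beta> * cnj z = of_real s * z) \<longleftrightarrow> \<bar>s\<bar> = cmod \<beta>"
proof
  assume "\<exists>z. z \<noteq> 0 \<and> \<beta> * cnj z = of_real s * z"
  then obtain z where z: "z \<noteq> 0" "\<beta> * cnj z = of_real s * z" by blast
  then have "cmod \<beta> * cmod z = \<bar>s\<bar> * cmod z" by (metis complex_mod_cnj norm_mult norm_of_real)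
  then show "\<bar>s\<bar> = cmod \<beta>" using z by simp
next
  assume s: "\<bar>s\<bar> = cmod \<beta>"
  obtain z0 where z0: "z0 \<noteq> 0" "\<beta> * cnj z0 = of_real (cmod \<beta>) * z0" using fix_exists by blast
  show "\<exists>z. z \<noteq> 0 \<and> \<beta> * cnj z = of_real s * z"
  proof (cases "s \<ge> 0")
    case True then show ?thesis using z0 s by auto
  next
    case False
    then have "s = - cmod \<beta>" using s by auto
    then show ?thesis using z0 by (intro exI[of _ "\<i> * z0"]) (simp add: algebra_simps)
  qed
qed

lemma eigenvalues_sym:
  fixes M :: "real^2^2"
  assumes "transpose M = M"
  shows "eigenvalues_of M = {c. \<bar>c - (M$1$1 + M$2$2)/2\<bar> = cmod (Complex ((M$1$1 - M$2$2)/2) (M$1$2))}"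
proof -
  define m where "m = (M$1$1 + M$2$2)/2"
  define \<beta> where "\<beta> = Complex ((M$1$1 - M$2$2)/2) (M$1$2)"
  have key: "M *v v = c *\<^sub>R v \<longleftrightarrow> \<beta> * cnj (cv v) = of_real (c - m) * cv v" for v c
  proof -
    have "M *v v = c *\<^sub>R v \<longleftrightarrow> cv (M *v v) = cv (c *\<^sub>R v)" by (simp add: cv_eq_iff)
    also have "\<dots> \<longleftrightarrow> of_real m * cv v + \<beta> * cnj (cv v) = of_real c * cv v"
      by (simp add: cv_mat[OF assms] cv_scale m_def \<beta>_def)
    also have "\<dots> \<longleftrightarrow> \<beta> * cnj (cv v) = of_real (c - m) * cv v"
      by (auto simp: algebra_simps)
    finally show ?thesis .
  qed
  have "c \<in> eigenvalues_of M \<longleftrightarrow> (\<exists>z. z \<noteq> 0 \<and> \<beta> * cnj z = of_real (c - m) * z)" for c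
  proof
    assume "c \<in> eigenvalues_of M"
    then obtain v where "v \<noteq> 0" "M *v v = c *\<^sub>R v" unfolding eigenvalues_of_def by blast
    then show "\<exists>z. z \<noteq> 0 \<and> \<beta> * cnj z = of_real (c - m) * z"
      using key cv_zero by blast
  next
    assume "\<exists>z. z \<noteq> 0 \<and> \<beta> * cnj z = of_real (c - m) * z"
    then obtain z where z: "z \<noteq> 0" "\<beta> * cnj z = of_real (c - m) * z" by blast
    have "vc z \<noteq> 0" using z(1) cv_zero[of "vc z"] by simp
    moreover have "M *v vc z = c *\<^sub>R vc z" using key[of "vc z" c] z(2) by simp
    ultimately show "c \<in> eigenvalues_of M" unfolding eigenvalues_of_def by blast
  qed
  then have "c \<in> eigenvalues_of M \<longleftrightarrow> \<bar>c - m\<bar> = cmod \<beta>" for c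
    by (simp only: eig_complex)
  then show ?thesis unfolding m_def \<beta>_def by blast
qed


lemma key_eig:
  fixes M :: "real^2^2"
  assumes "transpose M = M"
  shows "M *v v = c *\<^sub>R v \<longleftrightarrow>
    Complex ((M$1$1 - M$2$2)/2) (M$1$2) * cnj (cv v) = of_real (c - (M$1$1 + M$2$2)/2) * cv v"
proof -
  define m where "m = (M$1$1 + M$2$2)/2"
  define \<beta> where "\<beta> = Complex ((M$1$1 - M$2$2)/2) (M$1$2)"
  have "M *v v = c *\<^sub>R v \<longleftrightarrow> cv (M *v v) = cv (c *\<^sub>R v)" by (simp add: cv_eq_iff)
  also have "\<dots> \<longleftrightarrow> of_real m * cv v + \<beta> * cnj (cv v) = of_real c * cv v"
    by (simp add: cv_mat[OF assms] cv_scale m_def \<beta>_def)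
  also have "\<dots> \<longleftrightarrow> \<beta> * cnj (cv v) = of_real (c - m) * cv v"
    by (simp add: of_real_diff left_diff_distrib eq_diff_eq add.commute)
  finally show ?thesis unfolding m_def \<beta>_def .
qed

lemma eigen_line_iff:
  fixes M :: "real^2^2"
  assumes sym: "transpose M = M" and card: "card (eigenvalues_of M) = 2"
  shows "Complex ((M$1$1 - M$2$2)/2) (M$1$2) \<noteq> 0"
    and "{v. M *v v = Max (eigenvalues_of M) *\<^sub>R v} = span {frame_vec t} \<longleftrightarrow>
         Complex ((M$1$1 - M$2$2)/2) (M$1$2) / of_real (cmod (Complex ((M$1$1 - M$2$2)/2) (M$1$2)))
           = cis (2*t)"
proof -
  define m where "m = (M$1$1 + M$2$2)/2"
  define \<beta> where "\<beta> = Complex ((M$1$1 - M$2$2)/2) (M$1$2)"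
  define R where "R = cmod \<beta>"
  have "eigenvalues_of M = {c. \<bar>c - m\<bar> = R}"
    using eigenvalues_sym[OF sym] by (simp add: m_def \<beta>_def R_def)
  also have "{c. \<bar>c - m\<bar> = R} = {m + R, m - R}"
    by (auto simp: R_def abs_if)
  finally have E: "eigenvalues_of M = {m + R, m - R}" .
  have "R \<noteq> 0" using card E by (auto simp: R_def)
  then show b: "\<beta> \<noteq> 0" unfolding R_def by simp
  then have Rp: "R > 0" by (simp add: R_def)
  have mx: "Max (eigenvalues_of M) = m + R" using E Rp by (simp add: max_def)
  obtain z0 where z0: "z0 \<noteq> 0" "\<beta> * cnj z0 = of_real (cmod \<beta>) * z0" using fix_exists by blast
  have "{v. M *v v = Max (eigenvalues_of M) *\<^sub>R v} = {v. \<beta> * cnj (cv v) = of_real R * cv v}"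
    unfolding mx key_eig[OF sym] by (simp add: m_def \<beta>_def)
  also have "\<dots> = {v. \<exists>t::real. cv v = of_real t * z0}"
    using fix_space[OF b z0] by (simp add: R_def)
  also have "\<dots> = span {vc z0}"
    unfolding span_singleton
    by (auto simp: cv_eq_iff[symmetric] cv_scale)
  finally have Es: "{v. M *v v = Max (eigenvalues_of M) *\<^sub>R v} = span {vc z0}" .
  have nz: "vc z0 \<noteq> 0" using z0(1) cv_zero[of "vc z0"] by simp
  show "{v. M *v v = Max (eigenvalues_of M) *\<^sub>R v} = span {frame_vec t} \<longleftrightarrow>
         \<beta> / of_real (cmod \<beta>) = cis (2*t)"
    unfolding Es span_frame_iff[OF nz] using sqn_fix[OF b z0] by simp
qed

lemma apply_B_iff:
  fixes M :: "real^2^2" and w :: "real^2"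
  assumes sym: "transpose M = M" and b: "Complex ((M$1$1 - M$2$2)/2) (M$1$2) \<noteq> 0" and w: "w \<noteq> 0"
  shows "(\<lambda>v. (M - (trace M / 2) *\<^sub>R mat 1) *v v) ` span {w} = span {frame_vec t} \<longleftrightarrow>
    (Complex ((M$1$1 - M$2$2)/2) (M$1$2) / of_real (cmod (Complex ((M$1$1 - M$2$2)/2) (M$1$2))))^2
      * cnj (sqn (cv w)) = cis (2*t)"
proof -
  define \<beta> where "\<beta> = Complex ((M$1$1 - M$2$2)/2) (M$1$2)"
  define L where "L = (\<lambda>v. (M - (trace M / 2) *\<^sub>R mat 1) *v v)"
  have lin: "linear L" unfolding L_def by (rule matrix_vector_mul_linear)
  have im: "L ` span {w} = span {L w}"
    using span_linear_image[OF lin, of "{w}"] by simp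
  have cvL: "cv (L w) = \<beta> * cnj (cv w)" unfolding L_def \<beta>_def by (rule cv_matB[OF sym])
  have cw: "cv w \<noteq> 0" using w cv_zero by simp
  have Lnz: "L w \<noteq> 0" using cvL b cw cv_zero[of "L w"] by (simp add: \<beta>_def)
  have sq: "sqn (\<beta> * cnj (cv w)) = (\<beta> / of_real (cmod \<beta>))^2 * cnj (sqn (cv w))"
    using b cw by (simp add: sqn_def norm_mult power2_eq_square field_simps \<beta>_def)
  have "L ` span {w} = span {frame_vec t} \<longleftrightarrow> (\<beta> / of_real (cmod \<beta>))^2 * cnj (sqn (cv w)) = cis (2*t)"
    unfolding im span_frame_iff[OF Lnz] cvL sq ..
  then show ?thesis unfolding L_def \<beta>_def .
qed



lemma wn_lift:
  assumes cg: "continuous_on {0..1} g" and F: "\<forall>t\<in>{0..1}. F t = cis (g t)"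
  shows "winding_number F 0 = of_real ((g 1 - g 0) / (2*pi))"
proof -
  define p where "p = (\<lambda>t. \<i> * of_real (g t))"
  have pp: "path p" unfolding p_def path_def by (intro continuous_intros cg)
  have "winding_number F 0 = winding_number (exp \<circ> p) 0"
    by (rule winding_number_cong) (use F in \<open>auto simp: p_def cis_conv_exp\<close>)
  also have "\<dots> = (pathfinish p - pathstart p) / (2 * of_real pi * \<i>)"
    by (rule winding_number_compose_exp[OF pp])
  also have "\<dots> = of_real ((g 1 - g 0) / (2*pi))"
    by (simp add: p_def pathfinish_def pathstart_def field_simps)
  finally show ?thesis .
qed

lemma lift_unit:
  fixes F :: "real \<Rightarrow> complex"
  assumes cF: "continuous_on {0..1} F" and nF: "\<forall>t\<in>{0..1}. norm (F t) = 1"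
  shows "\<exists>g. continuous_on {0..1} g \<and> (\<forall>t\<in>{0..1}. F t = cis (g t))"
proof -
  have "contractible {0..1::real}" by (rule convex_imp_contractible) simp
  moreover have "\<And>t. t \<in> {0..1} \<Longrightarrow> F t \<noteq> 0" using nF by force
  ultimately obtain h where ch: "continuous_on {0..1} h" and eh: "\<And>t. t \<in> {0..1} \<Longrightarrow> F t = exp (h t)"
    using continuous_logarithm_on_contractible[OF cF] by metis
  have "continuous_on {0..1} (\<lambda>t. Im (h t))" by (intro continuous_intros ch)
  moreover have "F t = cis (Im (h t))" if t: "t \<in> {0..1}" for t
  proof -
    have e: "exp (h t) = F t" using eh[OF t] by simp
    have "norm (exp (h t)) = 1" unfolding e using nF t by blast
    then have "exp (Re (h t)) = 1" by (simp only: norm_exp_eq_Re)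
    then have "Re (h t) = 0" by simp
    then have "h t = \<i> * of_real (Im (h t))" by (simp add: complex_eq_iff)
    then show ?thesis using eh[OF t] by (metis cis_conv_exp)
  qed
  ultimately show ?thesis by blast
qed

lemma loops_homotopic_punctured:
  fixes p1 p2 :: "real \<Rightarrow> complex"
  assumes pa: "path p1" "path p2"
    and lp: "pathfinish p1 = pathstart p1" "pathfinish p2 = pathstart p2"
    and im: "path_image p1 \<subseteq> ball q r - {q}" "path_image p2 \<subseteq> ball q r - {q}"
    and wn: "winding_number p1 q = winding_number p2 q"
  shows "homotopic_loops (ball q r - {q}) p1 p2"
proof -
  define S where "S = ball q r - {q}"
  have h0: "homotopic_loops (-{q}) p1 p2"
    using winding_number_homotopic_loops_eq[of p1 q p2] pa lp im wn by blast
  define K where "K = path_image p1 \<union> path_image p2"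
  have cK: "compact K" unfolding K_def using pa by (simp add: compact_Un compact_path_image)
  have neK: "K \<noteq> {}" unfolding K_def by (simp add: path_image_nonempty)
  obtain z0 where z0: "z0 \<in> K" and mx: "\<And>y. y \<in> K \<Longrightarrow> dist q y \<le> dist q z0"
  proof -
    have "continuous_on K (dist q)" by (intro continuous_intros)
    then show ?thesis using continuous_attains_sup[OF cK neK, of "dist q"] that by blast
  qed
  define R where "R = dist q z0"
  have KS: "K \<subseteq> S" using im unfolding K_def S_def by auto
  have Rr: "R < r" using z0 KS by (auto simp: R_def S_def)
  have R0: "R > 0" using z0 KS by (auto simp: R_def S_def)
  define ret where "ret = (\<lambda>z. q + of_real (min 1 (R / norm (z - q))) * (z - q))"
  have cret: "continuous_on (-{q}) ret" unfolding ret_def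
    by (intro continuous_intros) auto
  have nret: "norm (ret z - q) = min (norm (z - q)) R" if "z \<noteq> q" for z
  proof -
    have n: "norm (z - q) > 0" using that by simp
    have "norm (ret z - q) = min 1 (R / norm (z - q)) * norm (z - q)"
      using R0 n by (simp add: ret_def norm_mult)
    also have "\<dots> = min (norm (z - q)) R" using n by (simp add: min_def field_simps)
    finally show ?thesis .
  qed
  have rS: "ret \<in> -{q} \<rightarrow> S"
  proof
    fix z assume "z \<in> -{q}"
    then have "z \<noteq> q" by simp
    then have "norm (ret z - q) = min (norm (z - q)) R" by (rule nret)
    moreover have "norm (z - q) > 0" using \<open>z \<noteq> q\<close> by simp
    ultimately have a: "0 < norm (ret z - q)" "norm (ret z - q) < r" using R0 Rr by auto
    then have "ret z \<noteq> q" by auto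
    moreover have "dist q (ret z) < r" using a by (simp add: dist_norm norm_minus_commute)
    ultimately show "ret z \<in> S" by (simp add: S_def)
  qed
  have h1: "homotopic_loops S (ret \<circ> p1) (ret \<circ> p2)"
    by (rule homotopic_loops_continuous_image[OF h0 cret rS])
  have fix1: "ret z = z" if "z \<in> K" for z
  proof -
    have "norm (z - q) \<le> R" using mx[OF that] by (simp add: R_def dist_norm norm_minus_commute)
    moreover have "z \<noteq> q" using that KS by (auto simp: S_def)
    ultimately have "R / norm (z - q) \<ge> 1" by simp
    then show ?thesis by (simp add: ret_def)
  qed
  have e1: "homotopic_loops S p1 (ret \<circ> p1)"
    by (rule homotopic_loops_eq) (use pa lp im fix1 in \<open>auto simp: S_def K_def path_image_def\<close>)
  have e2: "homotopic_loops S p2 (ret \<circ> p2)"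
    by (rule homotopic_loops_eq) (use pa lp im fix1 in \<open>auto simp: S_def K_def path_image_def\<close>)
  show ?thesis
    using homotopic_loops_trans[OF homotopic_loops_trans[OF e1 h1] homotopic_loops_sym[OF e2]]
    by (simp add: S_def)
qed



lemma circ_facts:
  assumes "0 < \<rho>" "\<rho> < r"
  shows "simple_path (circlepath q \<rho>)" "path (circlepath q \<rho>)"
    "pathfinish (circlepath q \<rho>) = pathstart (circlepath q \<rho>)"
    "path_image (circlepath q \<rho>) \<subseteq> ball q r - {q}"
    "winding_number (circlepath q \<rho>) q = 1"
  using assms by (auto simp: simple_path_circlepath winding_number_circlepath_centre)

lemma two_four: "(2 * a) / (4 * (b::real)) = a / (2 * b)"
  by (cases "b = 0") (simp_all add: field_simps)

lemma index_eq:
  fixes \<eta> :: "complex \<Rightarrow> (real^2) set" and f :: "complex \<Rightarrow> complex"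
  assumes r: "r > 0" and cf: "continuous_on (ball q r - {q}) f"
    and nf: "\<forall>x\<in>ball q r - {q}. norm (f x) = 1"
    and good: "\<forall>x\<in>ball q r - {q}. \<forall>\<theta>. \<eta> x = span {frame_vec \<theta>} \<longleftrightarrow> f x = cis (2*\<theta>)"
    and \<rho>: "0 < \<rho>" "\<rho> < r" and cg: "continuous_on {0..1} g"
    and lg: "\<forall>t\<in>{0..1}. f (circlepath q \<rho> t) = cis (g t)"
  shows "ph_index \<eta> q = (g 1 - g 0) / (4*pi)"
proof -
  define S where "S = ball q r - {q}"
  define c where "c = circlepath q \<rho>"
  note cc = circ_facts[OF \<rho>, of q, folded c_def]
  have wfc: "winding_number (f \<circ> c) 0 = of_real ((g 1 - g 0) / (2*pi))"
    by (rule wn_lift[OF cg]) (use lg in \<open>simp add: c_def\<close>)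
  have P: "(g 1 - g 0) / (4*pi) = (\<theta> 1 - \<theta> 0) / (2*pi)"
    if sp: "simple_path \<gamma>" and lp: "pathfinish \<gamma> = pathstart \<gamma>"
      and im: "path_image \<gamma> \<subseteq> S" and w1: "winding_number \<gamma> q = 1"
      and ct: "continuous_on {0..1} \<theta>"
      and sp\<theta>: "\<forall>t\<in>{0..1}. \<eta> (\<gamma> t) = span {frame_vec (\<theta> t)}"
    for \<gamma> \<theta>
  proof -
    have pg: "path \<gamma>" using sp by (rule simple_path_imp_path)
    have fg: "\<forall>t\<in>{0..1}. (f \<circ> \<gamma>) t = cis ((\<lambda>t. 2 * \<theta> t) t)"
    proof
      fix t :: real assume t: "t \<in> {0..1}"
      then have "\<gamma> t \<in> S" using im by (auto simp: path_image_def)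
      then have g1: "\<gamma> t \<in> ball q r - {q}" by (simp add: S_def)
      have e1: "\<eta> (\<gamma> t) = span {frame_vec (\<theta> t)}" using sp\<theta> t by blast
      have "f (\<gamma> t) = cis (2 * \<theta> t)" using good g1 e1 by blast
      then show "(f \<circ> \<gamma>) t = cis ((\<lambda>t. 2 * \<theta> t) t)" by simp
    qed
    have c2: "continuous_on {0..1} (\<lambda>t. 2 * \<theta> t)" by (intro continuous_intros ct)
    have wfg: "winding_number (f \<circ> \<gamma>) 0 = of_real ((2 * \<theta> 1 - 2 * \<theta> 0) / (2*pi))"
      using wn_lift[OF c2 fg] unfolding comp_def by simp
    have hl: "homotopic_loops S \<gamma> c"
      unfolding S_def
      by (rule loops_homotopic_punctured) (use pg lp im w1 cc in \<open>auto simp: S_def\<close>)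
    have fS: "f \<in> S \<rightarrow> -{0}" using nf by (force simp: S_def)
    have hl2: "homotopic_loops (-{0}) (f \<circ> \<gamma>) (f \<circ> c)"
      by (rule homotopic_loops_continuous_image[OF hl _ fS]) (use cf in \<open>simp add: S_def\<close>)
    have "winding_number (f \<circ> \<gamma>) 0 = winding_number (f \<circ> c) 0"
      by (rule winding_number_homotopic_loops[OF hl2])
    then have "(2 * \<theta> 1 - 2 * \<theta> 0) / (2*pi) = (g 1 - g 0) / (2*pi)"
      using wfg wfc of_real_eq_iff by metis
    then have eqg: "g 1 - g 0 = 2 * (\<theta> 1 - \<theta> 0)" by (simp add: algebra_simps)
    show ?thesis by (simp only: eqg two_four)
  qed
  show ?thesis
    unfolding ph_index_def
  proof (rule the_equality)
    show "\<exists>\<epsilon>>0. \<forall>\<gamma> \<theta>. simple_path \<gamma> \<and> pathfinish \<gamma> = pathstart \<gamma> \<and>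
      path_image \<gamma> \<subseteq> ball q \<epsilon> - {q} \<and> winding_number \<gamma> q = 1 \<and>
      continuous_on {0..1} \<theta> \<and>
      (\<forall>t\<in>{0..1}. \<eta> (\<gamma> t) = span {frame_vec (\<theta> t)})
      \<longrightarrow> (g 1 - g 0) / (4*pi) = (\<theta> 1 - \<theta> 0) / (2 * pi)"
      using r P by (auto simp: S_def)
  next
    fix k
    assume "\<exists>\<epsilon>>0. \<forall>\<gamma> \<theta>. simple_path \<gamma> \<and> pathfinish \<gamma> = pathstart \<gamma> \<and>
      path_image \<gamma> \<subseteq> ball q \<epsilon> - {q} \<and> winding_number \<gamma> q = 1 \<and>
      continuous_on {0..1} \<theta> \<and>
      (\<forall>t\<in>{0..1}. \<eta> (\<gamma> t) = span {frame_vec (\<theta> t)})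
      \<longrightarrow> k = (\<theta> 1 - \<theta> 0) / (2 * pi)"
    then obtain \<epsilon> where e: "\<epsilon> > 0" and H: "\<And>\<gamma> \<theta>. simple_path \<gamma> \<and> pathfinish \<gamma> = pathstart \<gamma> \<and>
      path_image \<gamma> \<subseteq> ball q \<epsilon> - {q} \<and> winding_number \<gamma> q = 1 \<and>
      continuous_on {0..1} \<theta> \<and>
      (\<forall>t\<in>{0..1}. \<eta> (\<gamma> t) = span {frame_vec (\<theta> t)})
      \<Longrightarrow> k = (\<theta> 1 - \<theta> 0) / (2 * pi)" by blast
    define \<rho>' where "\<rho>' = min \<epsilon> r / 2"
    have \<rho>'1: "0 < \<rho>'" "\<rho>' < r" using e r by (auto simp: \<rho>'_def)
    have \<rho>'2: "0 < \<rho>'" "\<rho>' < \<epsilon>" using e r by (auto simp: \<rho>'_def)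
    define c' where "c' = circlepath q \<rho>'"
    note cc1 = circ_facts[OF \<rho>'1, of q, folded c'_def]
    note cc2 = circ_facts[OF \<rho>'2, of q, folded c'_def]
    have cF: "continuous_on {0..1} (f \<circ> c')"
    proof (rule continuous_on_compose)
      show "continuous_on {0..1} c'" using cc1(2) by (simp add: path_def)
      show "continuous_on (c' ` {0..1}) f"
        using cf cc1(4) by (auto simp: path_image_def intro: continuous_on_subset)
    qed
    have nF: "\<forall>t\<in>{0..1}. norm ((f \<circ> c') t) = 1"
      using nf cc1(4) by (auto simp: path_image_def)
    obtain g' where cg': "continuous_on {0..1} g'" and lg': "\<forall>t\<in>{0..1}. (f \<circ> c') t = cis (g' t)"
      using lift_unit[OF cF nF] by blast
    define \<theta>' where "\<theta>' = (\<lambda>t. g' t / 2)"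
    have ct': "continuous_on {0..1} \<theta>'" unfolding \<theta>'_def by (intro continuous_intros cg') auto
    have sp': "\<forall>t\<in>{0..1}. \<eta> (c' t) = span {frame_vec (\<theta>' t)}"
    proof
      fix t :: real assume t: "t \<in> {0..1}"
      then have "c' t \<in> path_image c'" by (simp add: path_image_def)
      then have "c' t \<in> ball q r - {q}" using cc1(4) by blast
      moreover have "f (c' t) = cis (2 * \<theta>' t)" using lg' t by (simp add: \<theta>'_def)
      ultimately show "\<eta> (c' t) = span {frame_vec (\<theta>' t)}" using good by blast
    qed
    have "k = (\<theta>' 1 - \<theta>' 0) / (2 * pi)"
      using H[of c' \<theta>'] cc2 ct' sp' by blast
    moreover have "(g 1 - g 0) / (4*pi) = (\<theta>' 1 - \<theta>' 0) / (2 * pi)"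
      using P[of c' \<theta>'] cc1 ct' sp' by (simp add: S_def)
    ultimately show "k = (g 1 - g 0) / (4*pi)" by simp
  qed
qed



lemma some_span:
  fixes X :: "(real^2) set"
  assumes X: "X = span {u}" and u: "u \<noteq> 0"
  shows "(SOME w. w \<in> X \<and> w \<noteq> 0) \<noteq> 0 \<and> X = span {SOME w. w \<in> X \<and> w \<noteq> 0}
     \<and> sqn (cv (SOME w. w \<in> X \<and> w \<noteq> 0)) = sqn (cv u)"
proof -
  define w where "w = (SOME w. w \<in> X \<and> w \<noteq> 0)"
  have ex: "\<exists>w. w \<in> X \<and> w \<noteq> 0" using X u by (auto intro: span_base)
  have w: "w \<in> X" "w \<noteq> 0" using someI_ex[OF ex] by (auto simp: w_def)
  obtain c where c: "w = c *\<^sub>R u" using w(1) X by (auto simp: span_singleton)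
  have c0: "c \<noteq> 0" using c w(2) by auto
  have "span {w} = span {u}" using span_single_eq[OF w(2) u] c c0 by blast
  moreover have "sqn (cv w) = sqn (cv u)"
    unfolding c cv_scale using sqn_scale c0 u cv_zero by auto
  ultimately have "w \<noteq> 0 \<and> X = span {w} \<and> sqn (cv w) = sqn (cv u)" using w X by simp
  then show ?thesis unfolding w_def .
qed

lemma cont_sqn_cv:
  assumes "continuous_on T v" "\<forall>y\<in>T. v y \<noteq> 0"
  shows "continuous_on T (\<lambda>y. sqn (cv (v y)))"
proof -
  have nz: "\<forall>y\<in>T. of_real ((cmod (cv (v y)))^2) \<noteq> (0::complex)"
    using assms(2) cv_zero by auto
  show ?thesis
    unfolding sqn_def cv_def
    by (intro continuous_intros assms(1)) (use nz in \<open>auto simp: cv_def\<close>)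
qed

theorem theorem2:
  fixes A :: "complex \<Rightarrow> real^2^2" and q :: complex and V W :: "complex set"
    and \<xi> :: "complex \<Rightarrow> (real^2) set"
  assumes "open V" and "q \<in> V"
    and "continuous_on V A"
    and "\<forall>p\<in>V. transpose (A p) = A p"
    and "\<forall>p\<in>V - {q}. card (eigenvalues_of (A p)) = 2"
    and "open W" and "q \<in> W"
    and "continuous_line_field (W - {q}) \<xi>"
  shows "2 * tensor_index A q =
         ph_index (apply_tensor (\<lambda>p. A p - (trace (A p) / 2) *\<^sub>R mat 1) \<xi>) q + ph_index \<xi> q"
proof -
  note oV = assms(1) and qV = assms(2) and cA = assms(3) and sym = assms(4)
    and card = assms(5) and oW = assms(6) and qW = assms(7) and lf = assms(8)
  obtain r where r: "r > 0" "ball q r \<subseteq> V \<inter> W"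
    using open_Int[OF oV oW] qV qW openE by blast
  define S where "S = ball q r - {q}"
  have SV: "S \<subseteq> V - {q}" and SW: "S \<subseteq> W - {q}" using r by (auto simp: S_def)
  define \<beta> where "\<beta> = (\<lambda>p. Complex ((A p$1$1 - A p$2$2)/2) (A p$1$2))"
  define fE where "fE = (\<lambda>p. \<beta> p / of_real (cmod (\<beta> p)))"
  define fX where "fX = (\<lambda>p. sqn (cv (SOME w. w \<in> \<xi> p \<and> w \<noteq> 0)))"
  define fB where "fB = (\<lambda>p. (fE p)^2 * cnj (fX p))"
  have symS: "\<And>x. x \<in> S \<Longrightarrow> transpose (A x) = A x" using sym SV by auto
  have cardS: "\<And>x. x \<in> S \<Longrightarrow> card (eigenvalues_of (A x)) = 2" using card SV by auto
  have bnz: "\<And>x. x \<in> S \<Longrightarrow> \<beta> x \<noteq> 0"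
    unfolding \<beta>_def using eigen_line_iff(1)[OF symS cardS] by blast
  have goodE: "\<forall>x\<in>S. \<forall>\<theta>. eigen_line_field A x = span {frame_vec \<theta>} \<longleftrightarrow> fE x = cis (2*\<theta>)"
    unfolding eigen_line_field_def fE_def \<beta>_def using eigen_line_iff(2)[OF symS cardS] by blast
  have loc: "\<exists>N v. open N \<and> x \<in> N \<and> continuous_on (N \<inter> (W - {q})) v \<and>
        (\<forall>y\<in>N \<inter> (W - {q}). v y \<noteq> 0 \<and> \<xi> y = span {v y})" if "x \<in> S" for x
    using lf SW that unfolding continuous_line_field_def by blast
  have spanX: "\<exists>u. u \<noteq> 0 \<and> \<xi> x = span {u}" if xS: "x \<in> S" for x
  proof -
    obtain N v where "x \<in> N" and vv: "\<forall>y\<in>N \<inter> (W - {q}). v y \<noteq> 0 \<and> \<xi> y = span {v y}"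
      using loc[OF xS] by blast
    moreover have "x \<in> W - {q}" using SW xS by blast
    ultimately have "v x \<noteq> 0 \<and> \<xi> x = span {v x}" by blast
    then show ?thesis by blast
  qed
  have Xw: "(SOME w. w \<in> \<xi> x \<and> w \<noteq> 0) \<noteq> 0 \<and> \<xi> x = span {SOME w. w \<in> \<xi> x \<and> w \<noteq> 0}"
    if xS: "x \<in> S" for x
  proof -
    obtain u where "u \<noteq> 0" "\<xi> x = span {u}" using spanX[OF xS] by blast
    from some_span[OF this(2) this(1)] show ?thesis by blast
  qed
  have goodX: "\<forall>x\<in>S. \<forall>\<theta>. \<xi> x = span {frame_vec \<theta>} \<longleftrightarrow> fX x = cis (2*\<theta>)"
  proof (intro ballI allI)
    fix x \<theta> assume x: "x \<in> S"
    define w where "w = (SOME w. w \<in> \<xi> x \<and> w \<noteq> 0)"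
    have w: "w \<noteq> 0" "\<xi> x = span {w}" using Xw[OF x] unfolding w_def by auto
    have "\<xi> x = span {frame_vec \<theta>} \<longleftrightarrow> sqn (cv w) = cis (2*\<theta>)"
      unfolding w(2) by (rule span_frame_iff[OF w(1)])
    then show "\<xi> x = span {frame_vec \<theta>} \<longleftrightarrow> fX x = cis (2*\<theta>)"
      unfolding fX_def w_def .
  qed
  have goodB: "\<forall>x\<in>S. \<forall>\<theta>. apply_tensor (\<lambda>p. A p - (trace (A p) / 2) *\<^sub>R mat 1) \<xi> x = span {frame_vec \<theta>}
      \<longleftrightarrow> fB x = cis (2*\<theta>)"
  proof (intro ballI allI)
    fix x \<theta> assume x: "x \<in> S"
    have "apply_tensor (\<lambda>p. A p - (trace (A p) / 2) *\<^sub>R mat 1) \<xi> x =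
       (\<lambda>v. (A x - (trace (A x) / 2) *\<^sub>R mat 1) *v v) ` span {SOME w. w \<in> \<xi> x \<and> w \<noteq> 0}"
      unfolding apply_tensor_def using Xw[OF x] by simp
    then show "apply_tensor (\<lambda>p. A p - (trace (A p) / 2) *\<^sub>R mat 1) \<xi> x = span {frame_vec \<theta>}
      \<longleftrightarrow> fB x = cis (2*\<theta>)"
      using apply_B_iff[OF symS[OF x] bnz[OF x, unfolded \<beta>_def], of "SOME w. w \<in> \<xi> x \<and> w \<noteq> 0" \<theta>] Xw[OF x]
      unfolding fB_def fE_def fX_def \<beta>_def by simp
  qed
  have nE: "\<forall>x\<in>S. norm (fE x) = 1"
    using bnz by (simp add: fE_def norm_divide)
  have nX: "\<forall>x\<in>S. norm (fX x) = 1"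
  proof
    fix x assume x: "x \<in> S"
    have "cv (SOME w. w \<in> \<xi> x \<and> w \<noteq> 0) \<noteq> 0" using Xw[OF x] cv_zero by blast
    then show "norm (fX x) = 1" unfolding fX_def by (rule norm_sqn)
  qed
  have nB: "\<forall>x\<in>S. norm (fB x) = 1"
    using nE nX by (simp add: fB_def norm_mult norm_power)
  have cAS: "continuous_on S A" using cA SV continuous_on_subset by blast
  have cbeta: "continuous_on S \<beta>"
    unfolding \<beta>_def Complex_eq by (intro continuous_intros cAS) auto
  have cE: "continuous_on S fE"
    unfolding fE_def by (intro continuous_intros cbeta) (use bnz in auto)
  have cX: "continuous_on S fX"
  proof (rule continuous_on_eq_continuous_within[THEN iffD2], rule ballI)
    fix x assume x: "x \<in> S"
    obtain N v where N: "open N" "x \<in> N" and cv: "continuous_on (N \<inter> (W - {q})) v"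
      and vv: "\<forall>y\<in>N \<inter> (W - {q}). v y \<noteq> 0 \<and> \<xi> y = span {v y}"
      using loc[OF x] by blast
    have NS: "N \<inter> S \<subseteq> N \<inter> (W - {q})" using SW by auto
    have c1: "continuous_on (N \<inter> S) (\<lambda>y. sqn (cv (v y)))"
      by (rule cont_sqn_cv) (use continuous_on_subset[OF cv NS] vv NS in auto)
    have eq: "fX y = sqn (cv (v y))" if "y \<in> N \<inter> S" for y
      using some_span[of "\<xi> y" "v y"] vv NS that unfolding fX_def by blast
    have c2: "continuous_on (N \<inter> S) fX"
      using continuous_on_eq[OF c1] eq by auto
    have "continuous (at x within (N \<inter> S)) fX"
      using c2 x N(2) continuous_on_eq_continuous_within by blast
    moreover have "at x within (N \<inter> S) = at x within S"
      by (rule at_within_nhd[OF N(2) N(1)]) auto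
    ultimately show "continuous (at x within S) fX" by simp
  qed
  have cB: "continuous_on S fB"
    unfolding fB_def by (intro continuous_intros cE cX)
  define c where "c = circlepath q (r/2)"
  have cc: "path_image c \<subseteq> S" "path c" using r by (auto simp: c_def S_def)
  have compF: "continuous_on {0..1} (f \<circ> c) \<and> (\<forall>t\<in>{0..1}. norm ((f \<circ> c) t) = 1)"
    if "continuous_on S f" "\<forall>x\<in>S. norm (f x) = 1" for f
  proof
    show "continuous_on {0..1} (f \<circ> c)"
    proof (rule continuous_on_compose)
      show "continuous_on {0..1} c" using cc(2) by (simp add: path_def)
      show "continuous_on (c ` {0..1}) f"
        using that(1) cc(1) by (auto simp: path_image_def intro: continuous_on_subset)
    qed
    show "\<forall>t\<in>{0..1}. norm ((f \<circ> c) t) = 1"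
      using that(2) cc(1) by (auto simp: path_image_def)
  qed
  obtain gE where cgE: "continuous_on {0..1} gE" and lgE: "\<forall>t\<in>{0..1}. (fE \<circ> c) t = cis (gE t)"
    using lift_unit compF[OF cE nE] by blast
  obtain gX where cgX: "continuous_on {0..1} gX" and lgX: "\<forall>t\<in>{0..1}. (fX \<circ> c) t = cis (gX t)"
    using lift_unit compF[OF cX nX] by blast
  define gB where "gB = (\<lambda>t. 2 * gE t - gX t)"
  have cgB: "continuous_on {0..1} gB" unfolding gB_def by (intro continuous_intros cgE cgX)
  have lgB: "\<forall>t\<in>{0..1}. fB (c t) = cis (gB t)"
  proof
    fix t :: real assume t: "t \<in> {0..1}"
    have "fB (c t) = (cis (gE t))^2 * cnj (cis (gX t))"
      using lgE lgX t by (simp add: fB_def)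
    also have "\<dots> = cis (gB t)"
      unfolding gB_def power2_eq_square cis_cnj cis_mult by (simp add: algebra_simps)
    finally show "fB (c t) = cis (gB t)" .
  qed
  have rr: "0 < r/2" "r/2 < r" using r by auto
  have iE: "tensor_index A q = (gE 1 - gE 0) / (4*pi)"
    unfolding tensor_index_def
    by (rule index_eq[OF r(1) _ _ _ rr cgE]) (use cE nE goodE lgE in \<open>auto simp: S_def c_def\<close>)
  have iX: "ph_index \<xi> q = (gX 1 - gX 0) / (4*pi)"
    by (rule index_eq[OF r(1) _ _ _ rr cgX]) (use cX nX goodX lgX in \<open>auto simp: S_def c_def\<close>)
  have iB: "ph_index (apply_tensor (\<lambda>p. A p - (trace (A p) / 2) *\<^sub>R mat 1) \<xi>) q = (gB 1 - gB 0) / (4*pi)"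
    by (rule index_eq[OF r(1) _ _ _ rr cgB]) (use cB nB goodB lgB in \<open>auto simp: S_def c_def\<close>)
  show ?thesis unfolding iE iX iB gB_def by (simp add: field_simps)
qed


end
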